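(* Let $P=(Q,I,M,\Delta)$ be a broadcast protocol and $S$ the set returned by the saturation algorithm on $P$. Then $S$ is exactly the set of states $q$ for which there exists a lossy execution covering $\{q\}$. In particular, for every $F\subseteq Q$, there exists a lossy execution covering $F$ if and only if $F\cap S\neq\emptyset$.
   Context: A broadcast protocol is a tuple $P=(Q,I,M,\Delta)$ where $Q$ is a finite set of states, $I\subseteq Q$ initial states, $M$ a finite message alphabet and $\Delta\subseteq Q\times\{!!m,\ ??m \mid m\in M\}\times Q$ ($!!m$ = broadcast, $??m$ = reception). Protocols are complete for receptions: for every $q$, $m$ there is $q'$ with $(q,??m,q')\in\Delta$. A configuration is a finite undirected graph $\gamma=(V,E,L)$, $E$ symmetric irreflexive, $L:V\to Q$; $L(\gamma)=L(V)$; $\gamma$ is initial if $L(V)\subseteq I$. A lossy step goes from $\gamma=(V,E,L)$ to $\gamma'=(V,E,L')$ (same nodes and edges) if there exist a node $v$ and $m\in M$ with $(L(v),!!m,L'(v))\in\Delta$ and either (a) $L'(v')=L(v')$ for all $v'\neq v$ (the broadcast is lost), or (b) for every $v'\neq v$: if $v'$ is a neighbour of $v$ then $(L(v'),??m,L'(v'))\in\Delta$, otherwise $L'(v')=L(v')$ (successful broadcast). A lossy execution is a sequence $\gamma_0,\dots,\gamma_r$ with $\gamma_0$ initial and consecutive lossy steps; it covers $F$ if $L(\gamma_r)\cap F\neq\emptyset$. The saturation algorithm: start with $S:=I$, $c:=|I|$; repeat: if there is $(q_1,!!m,q_2)\in\Delta$ with $q_1\in S$, $q_2\notin S$, add $q_2$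 to $S$ and $c:=c+1$; else if there are $(q_1,!!m,q_2),(q_1',??m,q_2')\in\Delta$ with $q_1,q_2,q_1'\in S$, $q_2'\notin S$, add $q_2'$ and $c:=c+2$; else stop and return $S$. *)

theory Defs
  imports Main
begin

datatype 'm action = Bcast 'm | Recv 'm

definition broadcast_protocol ::
  "'q set \<Rightarrow> 'q set \<Rightarrow> 'm set \<Rightarrow> ('q \<times> 'm action \<times> 'q) set \<Rightarrow> bool" where
  "broadcast_protocol Q I M Delta \<longleftrightarrow>
     finite Q \<and> finite M \<and> I \<subseteq> Q \<and>
     (\<forall>(q, a, q') \<in> Delta. q \<in> Q \<and> q' \<in> Q \<and>
        (\<exists>m\<in>M. a = Bcast m \<or> a = Recv m)) \<and>
     (\<forall>q\<in>Q. \<forall>m\<in>M. \<exists>q'. (q, Recv m, q') \<in> Delta)"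

definition graph_ok :: "nat set \<Rightarrow> (nat \<times> nat) set \<Rightarrow> bool" where
  "graph_ok V E \<longleftrightarrow> finite V \<and> E \<subseteq> V \<times> V \<and> sym E \<and> (\<forall>v. (v, v) \<notin> E)"

definition lossy_step ::
  "('q \<times> 'm action \<times> 'q) set \<Rightarrow> nat set \<Rightarrow> (nat \<times> nat) set \<Rightarrow>
   (nat \<Rightarrow> 'q) \<Rightarrow> (nat \<Rightarrow> 'q) \<Rightarrow> bool" where
  "lossy_step Delta V E L L' \<longleftrightarrow>
     (\<exists>v\<in>V. \<exists>m. (L v, Bcast m, L' v) \<in> Delta \<and>
        ((\<forall>v'. v' \<noteq> v \<longrightarrow> L' v' = L v') \<or>
         (\<forall>v'. v' \<noteq> v \<longrightarrow>
            ((v, v') \<in> E \<longrightarrow> (L v', Recv m, L' v') \<in> Delta) \<and>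
            ((v, v') \<notin> E \<longrightarrow> L' v' = L v'))))"

definition lossy_execution_covering ::
  "'q set \<Rightarrow> ('q \<times> 'm action \<times> 'q) set \<Rightarrow> nat set \<Rightarrow> (nat \<times> nat) set \<Rightarrow>
   (nat \<Rightarrow> 'q) list \<Rightarrow> 'q set \<Rightarrow> bool" where
  "lossy_execution_covering I Delta V E Ls F \<longleftrightarrow>
     graph_ok V E \<and> Ls \<noteq> [] \<and>
     (\<forall>v\<in>V. hd Ls v \<in> I) \<and>
     (\<forall>i. Suc i < length Ls \<longrightarrow> lossy_step Delta V E (Ls ! i) (Ls ! Suc i)) \<and>
     (\<exists>v\<in>V. last Ls v \<in> F)"

definition coverable ::
  "'q set \<Rightarrow> ('q \<times> 'm action \<times> 'q) set \<Rightarrow> 'q set \<Rightarrow> bool" where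
  "coverable I Delta F \<longleftrightarrow> (\<exists>V E Ls. lossy_execution_covering I Delta V E Ls F)"

definition sat_step ::
  "('q \<times> 'm action \<times> 'q) set \<Rightarrow> 'q set \<times> nat \<Rightarrow> 'q set \<times> nat \<Rightarrow> bool" where
  "sat_step Delta Sc Sc' \<longleftrightarrow>
     (let (S, c) = Sc in
       (\<exists>q1 m q2. (q1, Bcast m, q2) \<in> Delta \<and> q1 \<in> S \<and> q2 \<notin> S \<and>
          Sc' = (insert q2 S, c + 1)) \<or>
       ((\<not> (\<exists>q1 m q2. (q1, Bcast m, q2) \<in> Delta \<and> q1 \<in> S \<and> q2 \<notin> S)) \<and>
        (\<exists>q1 m q2 q1' q2'. (q1, Bcast m, q2) \<in> Delta \<and> (q1', Recv m, q2') \<in> Delta \<and>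
          q1 \<in> S \<and> q2 \<in> S \<and> q1' \<in> S \<and> q2' \<notin> S \<and>
          Sc' = (insert q2' S, c + 2))))"

definition saturation_result ::
  "'q set \<Rightarrow> ('q \<times> 'm action \<times> 'q) set \<Rightarrow> 'q set \<Rightarrow> bool" where
  "saturation_result I Delta S \<longleftrightarrow>
     (\<exists>c. (sat_step Delta)\<^sup>*\<^sup>* (I, card I) (S, c) \<and> \<not> (\<exists>Sc'. sat_step Delta (S, c) Sc'))"

end

theory Submission
  imports Defs
begin

inductive_set reachS :: "'q set \<Rightarrow> ('q \<times> 'm action \<times> 'q) set \<Rightarrow> 'q set"
  for I :: "'q set" and Delta :: "('q \<times> 'm action \<times> 'q) set" where
  rI: "q \<in> I \<Longrightarrow> q \<in> reachS I Delta"
| rB: "q1 \<in> reachS I Delta \<Longrightarrow> (q1, Bcast m, q2) \<in> Delta \<Longrightarrow> q2 \<in> reachS I Delta"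
| rR: "q1 \<in> reachS I Delta \<Longrightarrow> q1' \<in> reachS I Delta \<Longrightarrow> (q1, Bcast m, q2) \<in> Delta \<Longrightarrow>
       (q1', Recv m, q2') \<in> Delta \<Longrightarrow> q2' \<in> reachS I Delta"

definition rstep :: "('q \<times> 'm action \<times> 'q) set \<Rightarrow> nat set \<Rightarrow> (nat \<times> nat) set \<Rightarrow> nat \<Rightarrow>
   (nat \<Rightarrow> 'q) \<Rightarrow> (nat \<Rightarrow> 'q) \<Rightarrow> bool" where
  "rstep Delta V E r L L' \<longleftrightarrow>
     (\<exists>v\<in>V. \<exists>m. (L v, Bcast m, L' v) \<in> Delta \<and>
        ((\<forall>v'. v' \<noteq> v \<longrightarrow> L' v' = L v') \<or>
         (v \<noteq> r \<and> (\<forall>v'. v' \<noteq> v \<longrightarrow>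
            ((v, v') \<in> E \<longrightarrow> (L v', Recv m, L' v') \<in> Delta) \<and>
            ((v, v') \<notin> E \<longrightarrow> L' v' = L v')))))"

lemma rstep_lossy: "rstep Delta V E r L L' \<Longrightarrow> lossy_step Delta V E L L'"
  unfolding rstep_def lossy_step_def by blast

lemma rtranclp_list:
  assumes "R\<^sup>*\<^sup>* a b"
  shows "\<exists>Ls. Ls \<noteq> [] \<and> hd Ls = a \<and> last Ls = b \<and> (\<forall>i. Suc i < length Ls \<longrightarrow> R (Ls ! i) (Ls ! Suc i))"
  using assms
proof (induction rule: rtranclp_induct)
  case base
  then show ?case by (intro exI[of _ "[a]"]) auto
next
  case (step y z)
  then obtain Ls where Ls: "Ls \<noteq> []" "hd Ls = a" "last Ls = y"
    "\<forall>i. Suc i < length Ls \<longrightarrow> R (Ls ! i) (Ls ! Suc i)" by blast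
  show ?case
  proof (intro exI[of _ "Ls @ [z]"] conjI allI impI)
    fix i assume i: "Suc i < length (Ls @ [z])"
    show "R ((Ls @ [z]) ! i) ((Ls @ [z]) ! Suc i)"
    proof (cases "Suc i < length Ls")
      case True
      then show ?thesis using Ls(4) by (simp add: nth_append)
    next
      case False
      then have "Suc i = length Ls" using i by simp
      then have "i = length Ls - 1" by simp
      moreover have "Ls ! (length Ls - 1) = y" using Ls by (simp add: last_conv_nth)
      ultimately show ?thesis using \<open>Suc i = length Ls\<close> step.hyps(2) by (simp add: nth_append)
    qed
  qed (use Ls in auto)
qed

definition execr where
  "execr I Delta V E r L \<longleftrightarrow> graph_ok V E \<and> r \<in> V \<and>
     (\<exists>L0. (\<forall>v\<in>V. L0 v \<in> I) \<and> (rstep Delta V E r)\<^sup>*\<^sup>* L0 L)"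

lemma execr_coverable:
  assumes "execr I Delta V E r L"
  shows "coverable I Delta {L r}"
proof -
  obtain L0 where g: "graph_ok V E" "r \<in> V" "\<forall>v\<in>V. L0 v \<in> I" "(rstep Delta V E r)\<^sup>*\<^sup>* L0 L"
    using assms unfolding execr_def by blast
  obtain Ls where Ls: "Ls \<noteq> []" "hd Ls = L0" "last Ls = L"
    "\<forall>i. Suc i < length Ls \<longrightarrow> rstep Delta V E r (Ls ! i) (Ls ! Suc i)"
    using rtranclp_list[OF g(4)] by blast
  have "lossy_execution_covering I Delta V E Ls {L r}"
    unfolding lossy_execution_covering_def using g Ls rstep_lossy by blast
  then show ?thesis unfolding coverable_def by blast
qed


lemma lossy_step_inv:
  assumes "lossy_step Delta V E L L'" "\<forall>v\<in>V. L v \<in> reachS I Delta"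
  shows "\<forall>v\<in>V. L' v \<in> reachS I Delta"
proof
  fix x assume x: "x \<in> V"
  obtain v m where v: "v \<in> V" "(L v, Bcast m, L' v) \<in> Delta"
    and H: "(\<forall>v'. v' \<noteq> v \<longrightarrow> L' v' = L v') \<or>
         (\<forall>v'. v' \<noteq> v \<longrightarrow>
            ((v, v') \<in> E \<longrightarrow> (L v', Recv m, L' v') \<in> Delta) \<and>
            ((v, v') \<notin> E \<longrightarrow> L' v' = L v'))"
    using assms(1) unfolding lossy_step_def by blast
  have Lv: "L v \<in> reachS I Delta" using assms(2) v by blast
  have Lx: "L x \<in> reachS I Delta" using assms(2) x by blast
  show "L' x \<in> reachS I Delta"
  proof (cases "x = v")
    case True then show ?thesis using rB[OF Lv v(2)] by simp
  next
    case False
    show ?thesis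
    proof (cases "(v, x) \<in> E")
      case True
      then show ?thesis using H False Lx rR[OF Lv Lx v(2)] by metis
    next
      case f2: False
      then show ?thesis using H False Lx by metis
    qed
  qed
qed

lemma coverable_reach:
  assumes "coverable I Delta {q}"
  shows "q \<in> reachS I Delta"
proof -
  obtain V E Ls where c: "lossy_execution_covering I Delta V E Ls {q}"
    using assms unfolding coverable_def by blast
  then have c1: "Ls \<noteq> []" "\<forall>v\<in>V. hd Ls v \<in> I"
    "\<forall>i. Suc i < length Ls \<longrightarrow> lossy_step Delta V E (Ls ! i) (Ls ! Suc i)"
    "\<exists>v\<in>V. last Ls v \<in> {q}"
    unfolding lossy_execution_covering_def by auto
  have "\<forall>v\<in>V. (Ls ! i) v \<in> reachS I Delta" if "i < length Ls" for i
    using that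
  proof (induction i)
    case 0
    then show ?case using c1(1,2) by (simp add: hd_conv_nth reachS.rI)
  next
    case (Suc i)
    then show ?case using c1(3) lossy_step_inv by (metis Suc_lessD)
  qed
  then have "\<forall>v\<in>V. last Ls v \<in> reachS I Delta" using c1(1) by (simp add: last_conv_nth)
  then show ?thesis using c1(4) by auto
qed

lemma sat_step_inv:
  assumes "sat_step Delta Sc Sc'" "fst Sc \<subseteq> reachS I Delta"
  shows "fst Sc' \<subseteq> reachS I Delta"
proof -
  obtain S c where Sc: "Sc = (S, c)" by (cases Sc)
  show ?thesis using assms unfolding Sc sat_step_def
    apply auto
    apply (blast intro: reachS.intros)+
    done
qed

lemma sat_reach:
  assumes "saturation_result I Delta S"
  shows "S = reachS I Delta"
proof
  obtain c where c: "(sat_step Delta)\<^sup>*\<^sup>* (I, card I) (S, c)" "\<not> (\<exists>Sc'. sat_step Delta (S, c) Sc')"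
    using assms unfolding saturation_result_def by blast
  have "fst Sc \<subseteq> reachS I Delta" if "(sat_step Delta)\<^sup>*\<^sup>* (I, card I) Sc" for Sc
    using that
  proof (induction rule: rtranclp_induct)
    case base then show ?case by (auto intro: reachS.rI)
  next
    case (step y z) then show ?case using sat_step_inv by blast
  qed
  from this[OF c(1)] show "S \<subseteq> reachS I Delta" by simp
  have cl1: "\<And>q1 m q2. (q1, Bcast m, q2) \<in> Delta \<Longrightarrow> q1 \<in> S \<Longrightarrow> q2 \<in> S"
  proof (rule ccontr)
    fix q1 m q2 assume "(q1, Bcast m, q2) \<in> Delta" "q1 \<in> S" "q2 \<notin> S"
    then have "sat_step Delta (S, c) (insert q2 S, c + 1)" unfolding sat_step_def by auto
    then show False using c(2) by blast
  qed
  have cl2: "\<And>q1 m q2 q1' q2'. (q1, Bcast m, q2) \<in> Delta \<Longrightarrow> (q1', Recv m, q2') \<in> Delta \<Longrightarrow>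
     q1 \<in> S \<Longrightarrow> q1' \<in> S \<Longrightarrow> q2' \<in> S"
  proof (rule ccontr)
    fix q1 m q2 q1' q2' assume a: "(q1, Bcast m, q2) \<in> Delta" "(q1', Recv m, q2') \<in> Delta"
     "q1 \<in> S" "q1' \<in> S" "q2' \<notin> S"
    have "q2 \<in> S" using cl1 a by blast
    then have "sat_step Delta (S, c) (insert q2' S, c + 2)" unfolding sat_step_def
      using a cl1 by (simp only: prod.case Let_def) blast
    then show False using c(2) by blast
  qed
  have IS: "I \<subseteq> S"
  proof -
    have "I \<subseteq> fst Sc" if "(sat_step Delta)\<^sup>*\<^sup>* (I, card I) Sc" for Sc
      using that
    proof (induction rule: rtranclp_induct)
      case base then show ?case by simp
    next
      case (step y z) then show ?case
        by (cases y) (auto simp: sat_step_def)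
    qed
    from this[OF c(1)] show ?thesis by simp
  qed
  show "reachS I Delta \<subseteq> S"
  proof
    fix q assume "q \<in> reachS I Delta"
    then show "q \<in> S"
      by (induction rule: reachS.induct) (use IS cl1 cl2 in blast)+
  qed
qed


lemma rstep_pt:
  assumes "rstep Delta V E r L L'"
  shows "L' x = L x \<or> (\<exists>p a. (p, a, L' x) \<in> Delta)"
proof -
  obtain v m where v: "v \<in> V" "(L v, Bcast m, L' v) \<in> Delta"
    and H: "(\<forall>v'. v' \<noteq> v \<longrightarrow> L' v' = L v') \<or>
         (v \<noteq> r \<and> (\<forall>v'. v' \<noteq> v \<longrightarrow>
            ((v, v') \<in> E \<longrightarrow> (L v', Recv m, L' v') \<in> Delta) \<and>
            ((v, v') \<notin> E \<longrightarrow> L' v' = L v')))"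
    using assms unfolding rstep_def by blast
  show ?thesis
  proof (cases "x = v")
    case True then show ?thesis using v by blast
  next
    case False then show ?thesis using H by blast
  qed
qed

lemma execr_Q:
  assumes P: "broadcast_protocol Q I M Delta" and e: "execr I Delta V E r L"
  shows "\<forall>v\<in>V. L v \<in> Q"
proof -
  have tQ: "\<And>p a q. (p, a, q) \<in> Delta \<Longrightarrow> q \<in> Q" using P unfolding broadcast_protocol_def by blast
  have IQ: "I \<subseteq> Q" using P unfolding broadcast_protocol_def by blast
  obtain L0 where L0: "\<forall>v\<in>V. L0 v \<in> I" "(rstep Delta V E r)\<^sup>*\<^sup>* L0 L"
    using e unfolding execr_def by blast
  from L0(2) show ?thesis
  proof (induction rule: rtranclp_induct)
    case base then show ?case using L0(1) IQ by blast
  next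
    case (step y z)
    show ?case
    proof
      fix x assume "x \<in> V"
      then show "z x \<in> Q" using rstep_pt[OF step.hyps(2), of x] step.IH tQ by metis
    qed
  qed
qed

definition comb :: "(nat \<Rightarrow> 'q) \<Rightarrow> (nat \<Rightarrow> 'q) \<Rightarrow> nat \<Rightarrow> 'q" where
  "comb a b x = (if even x then a (x div 2) else b (x div 2))"

definition cV :: "nat set \<Rightarrow> nat set \<Rightarrow> nat set" where
  "cV V1 V2 = {x. (even x \<and> x div 2 \<in> V1) \<or> (odd x \<and> x div 2 \<in> V2)}"

definition cE :: "(nat \<times> nat) set \<Rightarrow> (nat \<times> nat) set \<Rightarrow> nat \<Rightarrow> nat \<Rightarrow> (nat \<times> nat) set" where
  "cE E1 E2 r1 r2 = {(x, y). (even x \<and> even y \<and> (x div 2, y div 2) \<in> E1) \<or>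
     (odd x \<and> odd y \<and> (x div 2, y div 2) \<in> E2) \<or>
     (x = 2 * r1 \<and> y = 2 * r2 + 1) \<or> (x = 2 * r2 + 1 \<and> y = 2 * r1)}"

lemma comb_even[simp]: "comb a b (2 * v) = a v" by (simp add: comb_def)
lemma comb_odd[simp]: "comb a b (2 * v + 1) = b v" by (simp add: comb_def)
lemma comb_odd'[simp]: "comb a b (Suc (2 * v)) = b v" by (simp add: comb_def)

lemma lift1:
  assumes "rstep Delta V1 E1 r1 a a'"
  shows "rstep Delta (cV V1 V2) (cE E1 E2 r1 r2) (2 * r2 + 1) (comb a b) (comb a' b)"
proof -
  obtain v m where v: "v \<in> V1" "(a v, Bcast m, a' v) \<in> Delta"
    and H: "(\<forall>v'. v' \<noteq> v \<longrightarrow> a' v' = a v') \<or>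
         (v \<noteq> r1 \<and> (\<forall>v'. v' \<noteq> v \<longrightarrow>
            ((v, v') \<in> E1 \<longrightarrow> (a v', Recv m, a' v') \<in> Delta) \<and>
            ((v, v') \<notin> E1 \<longrightarrow> a' v' = a v')))"
    using assms unfolding rstep_def by blast
  have vV: "2 * v \<in> cV V1 V2" using v(1) by (simp add: cV_def)
  have dv: "\<And>x. even x \<Longrightarrow> x \<noteq> 2 * v \<Longrightarrow> x div 2 \<noteq> v" by auto
  from H show ?thesis
  proof
    assume L: "\<forall>v'. v' \<noteq> v \<longrightarrow> a' v' = a v'"
    have "\<forall>x. x \<noteq> 2 * v \<longrightarrow> comb a' b x = comb a b x"
      using L dv by (auto simp: comb_def)
    then show ?thesis unfolding rstep_def using vV v(2) by (intro bexI[of _ "2 * v"]) auto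
  next
    assume S: "v \<noteq> r1 \<and> (\<forall>v'. v' \<noteq> v \<longrightarrow>
            ((v, v') \<in> E1 \<longrightarrow> (a v', Recv m, a' v') \<in> Delta) \<and>
            ((v, v') \<notin> E1 \<longrightarrow> a' v' = a v'))"
    have ne: "2 * v \<noteq> 2 * r2 + 1" by presburger
    have "\<forall>x. x \<noteq> 2 * v \<longrightarrow>
            ((2 * v, x) \<in> cE E1 E2 r1 r2 \<longrightarrow> (comb a b x, Recv m, comb a' b x) \<in> Delta) \<and>
            ((2 * v, x) \<notin> cE E1 E2 r1 r2 \<longrightarrow> comb a' b x = comb a b x)"
    proof (intro allI impI conjI)
      fix x assume x: "x \<noteq> 2 * v"
      {
        assume "(2 * v, x) \<in> cE E1 E2 r1 r2"
        then have "even x \<and> (v, x div 2) \<in> E1" using S ne unfolding cE_def by auto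
        then show "(comb a b x, Recv m, comb a' b x) \<in> Delta"
          using S dv[OF _ x] by (simp add: comb_def)
      }
      {
        assume ne2: "(2 * v, x) \<notin> cE E1 E2 r1 r2"
        show "comb a' b x = comb a b x"
        proof (cases "even x")
          case True
          then have "(v, x div 2) \<notin> E1" using ne2 unfolding cE_def by auto
          then show ?thesis using S dv[OF True x] True by (simp add: comb_def)
        qed (simp add: comb_def)
      }
    qed
    then show ?thesis unfolding rstep_def using vV v(2) ne by (intro bexI[of _ "2 * v"]) auto
  qed
qed

lemma lift2:
  assumes "rstep Delta V2 E2 r2 b b'"
  shows "rstep Delta (cV V1 V2) (cE E1 E2 r1 r2) (2 * r2 + 1) (comb a b) (comb a b')"
proof -
  obtain v m where v: "v \<in> V2" "(b v, Bcast m, b' v) \<in> Delta"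
    and H: "(\<forall>v'. v' \<noteq> v \<longrightarrow> b' v' = b v') \<or>
         (v \<noteq> r2 \<and> (\<forall>v'. v' \<noteq> v \<longrightarrow>
            ((v, v') \<in> E2 \<longrightarrow> (b v', Recv m, b' v') \<in> Delta) \<and>
            ((v, v') \<notin> E2 \<longrightarrow> b' v' = b v')))"
    using assms unfolding rstep_def by blast
  have vV: "2 * v + 1 \<in> cV V1 V2" using v(1) by (simp add: cV_def)
  have dv: "\<And>x. odd x \<Longrightarrow> x \<noteq> 2 * v + 1 \<Longrightarrow> x div 2 \<noteq> v" by auto
  from H show ?thesis
  proof
    assume L: "\<forall>v'. v' \<noteq> v \<longrightarrow> b' v' = b v'"
    have "\<forall>x. x \<noteq> 2 * v + 1 \<longrightarrow> comb a b' x = comb a b x"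
      using L dv by (auto simp: comb_def)
    then show ?thesis unfolding rstep_def using vV v(2) by (intro bexI[of _ "2 * v + 1"]) auto
  next
    assume S: "v \<noteq> r2 \<and> (\<forall>v'. v' \<noteq> v \<longrightarrow>
            ((v, v') \<in> E2 \<longrightarrow> (b v', Recv m, b' v') \<in> Delta) \<and>
            ((v, v') \<notin> E2 \<longrightarrow> b' v' = b v'))"
    have ne: "2 * v + 1 \<noteq> 2 * r2 + 1" using S by simp
    have ne': "2 * v + 1 \<noteq> 2 * r1" by presburger
    have "\<forall>x. x \<noteq> 2 * v + 1 \<longrightarrow>
            ((2 * v + 1, x) \<in> cE E1 E2 r1 r2 \<longrightarrow> (comb a b x, Recv m, comb a b' x) \<in> Delta) \<and>
            ((2 * v + 1, x) \<notin> cE E1 E2 r1 r2 \<longrightarrow> comb a b' x = comb a b x)"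
    proof (intro allI impI conjI)
      fix x assume x: "x \<noteq> 2 * v + 1"
      {
        assume "(2 * v + 1, x) \<in> cE E1 E2 r1 r2"
        then have "odd x \<and> (v, x div 2) \<in> E2" using ne ne' unfolding cE_def by auto
        then show "(comb a b x, Recv m, comb a b' x) \<in> Delta"
          using S dv[OF _ x] by (simp add: comb_def)
      }
      {
        assume ne2: "(2 * v + 1, x) \<notin> cE E1 E2 r1 r2"
        show "comb a b' x = comb a b x"
        proof (cases "odd x")
          case True
          then have "(v, x div 2) \<notin> E2" using ne2 unfolding cE_def by auto
          then show ?thesis using S dv[OF True x] True by (simp add: comb_def)
        qed (simp add: comb_def)
      }
    qed
    then show ?thesis unfolding rstep_def using vV v(2) ne by (intro bexI[of _ "2 * v + 1"]) auto
  qed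
qed


lemma lift1_star:
  assumes "(rstep Delta V1 E1 r1)\<^sup>*\<^sup>* a a'"
  shows "(rstep Delta (cV V1 V2) (cE E1 E2 r1 r2) (2 * r2 + 1))\<^sup>*\<^sup>* (comb a b) (comb a' b)"
  using assms
proof (induction rule: rtranclp_induct)
  case (step y z) then show ?case using lift1 by (metis rtranclp.rtrancl_into_rtrancl)
qed simp

lemma lift2_star:
  assumes "(rstep Delta V2 E2 r2)\<^sup>*\<^sup>* b b'"
  shows "(rstep Delta (cV V1 V2) (cE E1 E2 r1 r2) (2 * r2 + 1))\<^sup>*\<^sup>* (comb a b) (comb a b')"
  using assms
proof (induction rule: rtranclp_induct)
  case (step y z) then show ?case using lift2 by (metis rtranclp.rtrancl_into_rtrancl)
qed simp

lemma graph_comb: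
  assumes "graph_ok V1 E1" "graph_ok V2 E2" "r1 \<in> V1" "r2 \<in> V2"
  shows "graph_ok (cV V1 V2) (cE E1 E2 r1 r2)"
proof -
  have "cV V1 V2 \<subseteq> (\<lambda>x. 2 * x) ` V1 \<union> (\<lambda>x. 2 * x + 1) ` V2"
  proof
    fix x assume "x \<in> cV V1 V2"
    then show "x \<in> (\<lambda>x. 2 * x) ` V1 \<union> (\<lambda>x. 2 * x + 1) ` V2"
      unfolding cV_def
      by (metis (mono_tags, lifting) UnI1 UnI2 image_eqI mem_Collect_eq odd_two_times_div_two_succ even_two_times_div_two)
  qed
  moreover have "finite ((\<lambda>x. 2 * x) ` V1 \<union> (\<lambda>x. 2 * x + 1) ` V2)"
    using assms(1,2) unfolding graph_ok_def by blast
  ultimately have f: "finite (cV V1 V2)" using finite_subset by blast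
  have s1: "E1 \<subseteq> V1 \<times> V1" "sym E1" "E2 \<subseteq> V2 \<times> V2" "sym E2"
    using assms(1,2) unfolding graph_ok_def by auto
  have sub: "cE E1 E2 r1 r2 \<subseteq> cV V1 V2 \<times> cV V1 V2"
    using s1(1,3) assms(3,4) unfolding cE_def cV_def by auto
  have sy: "sym (cE E1 E2 r1 r2)"
    using s1(2,4) unfolding cE_def sym_def by auto
  have nr: "2 * r1 \<noteq> 2 * r2 + 1" by presburger
  have irr: "\<forall>v. (v, v) \<notin> cE E1 E2 r1 r2"
    using assms(1,2) nr unfolding cE_def graph_ok_def by auto
  show ?thesis unfolding graph_ok_def using f sub sy irr by blast
qed

lemma combine:
  assumes P: "broadcast_protocol Q I M Delta"
    and e1: "execr I Delta V1 E1 r1 a" and e2: "execr I Delta V2 E2 r2 b"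
    and t1: "(a r1, Bcast m, q2) \<in> Delta" and t2: "(b r2, Recv m, q2') \<in> Delta"
  shows "\<exists>V E r L. execr I Delta V E r L \<and> L r = q2'"
proof -
  obtain a0 where a0: "graph_ok V1 E1" "r1 \<in> V1" "\<forall>v\<in>V1. a0 v \<in> I" "(rstep Delta V1 E1 r1)\<^sup>*\<^sup>* a0 a"
    using e1 unfolding execr_def by blast
  obtain b0 where b0: "graph_ok V2 E2" "r2 \<in> V2" "\<forall>v\<in>V2. b0 v \<in> I" "(rstep Delta V2 E2 r2)\<^sup>*\<^sup>* b0 b"
    using e2 unfolding execr_def by blast
  have aQ: "\<forall>v\<in>V1. a v \<in> Q" using execr_Q[OF P e1] .
  have mM: "m \<in> M" using P t1 unfolding broadcast_protocol_def by fastforce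
  have rc: "\<forall>q\<in>Q. \<exists>q'. (q, Recv m, q') \<in> Delta" using P mM unfolding broadcast_protocol_def by blast
  have E1V: "E1 \<subseteq> V1 \<times> V1" using a0(1) unfolding graph_ok_def by blast
  let ?V = "cV V1 V2" and ?E = "cE E1 E2 r1 r2" and ?r = "2 * r2 + 1"
  have g: "graph_ok ?V ?E" using graph_comb a0(1,2) b0(1,2) by blast
  have rV: "?r \<in> ?V" using b0(2) by (simp add: cV_def)
  have st1: "(rstep Delta ?V ?E ?r)\<^sup>*\<^sup>* (comb a0 b0) (comb a b)"
    using lift1_star[OF a0(4), of V2 E2 r2 b0] lift2_star[OF b0(4), of V1 E1 r1 a] by simp
  define L' where "L' x = (if x = 2 * r1 then q2 else if x = ?r then q2'
      else if even x \<and> (r1, x div 2) \<in> E1 then (SOME q'. (a (x div 2), Recv m, q') \<in> Delta)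
      else comb a b x)" for x
  have ne: "2 * r1 \<noteq> ?r" by presburger
  have "rstep Delta ?V ?E ?r (comb a b) L'"
    unfolding rstep_def
  proof (intro bexI[of _ "2 * r1"] exI[of _ m] conjI disjI2)
    show "2 * r1 \<in> ?V" using a0(2) by (simp add: cV_def)
    show "(comb a b (2 * r1), Bcast m, L' (2 * r1)) \<in> Delta" using t1 by (simp add: L'_def)
    show "2 * r1 \<noteq> ?r" by (rule ne)
    show "\<forall>v'. v' \<noteq> 2 * r1 \<longrightarrow>
        ((2 * r1, v') \<in> ?E \<longrightarrow> (comb a b v', Recv m, L' v') \<in> Delta) \<and>
        ((2 * r1, v') \<notin> ?E \<longrightarrow> L' v' = comb a b v')"
    proof (intro allI impI conjI)
      fix x assume x: "x \<noteq> 2 * r1"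
      {
        assume "(2 * r1, x) \<in> ?E"
        then have c: "x = ?r \<or> (even x \<and> (r1, x div 2) \<in> E1)" unfolding cE_def by auto
        show "(comb a b x, Recv m, L' x) \<in> Delta"
        proof (cases "x = ?r")
          case True then show ?thesis using t2 ne by (simp add: L'_def)
        next
          case False
          then have ev: "even x" "(r1, x div 2) \<in> E1" using c by auto
          then have "a (x div 2) \<in> Q" using E1V aQ by blast
          then obtain q' where "(a (x div 2), Recv m, q') \<in> Delta" using rc by blast
          then have "(a (x div 2), Recv m, SOME q'. (a (x div 2), Recv m, q') \<in> Delta) \<in> Delta"
            by (rule someI)
          then show ?thesis using x False ev by (simp add: L'_def comb_def)
        qed
      }
      {
        assume "(2 * r1, x) \<notin> ?E"
        then have "x \<noteq> ?r" "\<not> (even x \<and> (r1, x div 2) \<in> E1)" unfolding cE_def by auto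
        then show "L' x = comb a b x" using x by (auto simp add: L'_def)
      }
    qed
  qed
  then have "(rstep Delta ?V ?E ?r)\<^sup>*\<^sup>* (comb a0 b0) L'" using st1 by simp
  moreover have "\<forall>v\<in>?V. comb a0 b0 v \<in> I" using a0(3) b0(3) by (auto simp: cV_def comb_def)
  ultimately have "execr I Delta ?V ?E ?r L'" unfolding execr_def using g rV by blast
  moreover have "L' ?r = q2'" using ne by (simp add: L'_def)
  ultimately show ?thesis by blast
qed

lemma reach_execr:
  assumes P: "broadcast_protocol Q I M Delta" and q: "q \<in> reachS I Delta"
  shows "\<exists>V E r L. execr I Delta V E r L \<and> L r = q"
  using q
proof (induction rule: reachS.induct)
  case (rI q)
  have "graph_ok {0} {}" unfolding graph_ok_def sym_def by auto
  then have "execr I Delta {0} {} 0 (\<lambda>_. q)" unfolding execr_def using rI by auto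
  then show ?case by blast
next
  case (rB q1 m q2)
  then obtain V E r L where e: "execr I Delta V E r L" "L r = q1" by blast
  have rV: "r \<in> V" using e(1) unfolding execr_def by blast
  have "rstep Delta V E r L (L(r := q2))"
    unfolding rstep_def using rV e(2) rB.hyps(2) by (intro bexI[of _ r] exI[of _ m]) auto
  then have "execr I Delta V E r (L(r := q2))" using e(1) unfolding execr_def
    by (meson rtranclp.rtrancl_into_rtrancl)
  moreover have "(L(r := q2)) r = q2" by simp
  ultimately show ?case by blast
next
  case (rR q1 q1' m q2 q2')
  then obtain V1 E1 r1 a where e1: "execr I Delta V1 E1 r1 a" "a r1 = q1" by blast
  obtain V2 E2 r2 b where e2: "execr I Delta V2 E2 r2 b" "b r2 = q1'" using rR by blast
  show ?case using combine[OF P e1(1) e2(1)] rR.hyps(3,4) e1(2) e2(2) by blast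
qed

lemma lec_change:
  assumes "lossy_execution_covering I Delta V E Ls F" "v \<in> V" "last Ls v \<in> F'"
  shows "lossy_execution_covering I Delta V E Ls F'"
  using assms unfolding lossy_execution_covering_def
  apply (elim conjE)
  apply (intro conjI)
      apply assumption+
  apply (rule bexI[of _ v])
   apply assumption+
  done

theorem lemma3p4:
  fixes Q I :: "'q set" and M :: "'m set" and Delta :: "('q \<times> 'm action \<times> 'q) set"
  assumes "broadcast_protocol Q I M Delta"
    and "saturation_result I Delta S"
  shows "S = {q. coverable I Delta {q}} \<and>
         (\<forall>F. F \<subseteq> Q \<longrightarrow> (coverable I Delta F \<longleftrightarrow> F \<inter> S \<noteq> {}))"
proof -
  have S: "S = reachS I Delta" using sat_reach[OF assms(2)] .
  have eq: "S = {q. coverable I Delta {q}}"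
  proof
    show "S \<subseteq> {q. coverable I Delta {q}}"
    proof
      fix q assume "q \<in> S"
      then have "q \<in> reachS I Delta" using S by simp
      then have "\<exists>V E r L. execr I Delta V E r L \<and> L r = q" by (rule reach_execr[OF assms(1)])
      then obtain V E r L where "execr I Delta V E r L" "L r = q" by blast
      then show "q \<in> {q. coverable I Delta {q}}" using execr_coverable[of I Delta V E r L] by simp
    qed
    show "{q. coverable I Delta {q}} \<subseteq> S"
    proof
      fix q assume "q \<in> {q. coverable I Delta {q}}"
      then have "coverable I Delta {q}" by simp
      then have "q \<in> reachS I Delta" by (rule coverable_reach)
      then show "q \<in> S" using S by simp
    qed
  qed
  have cov: "coverable I Delta F \<longleftrightarrow> (\<exists>q\<in>F. coverable I Delta {q})" for F
  proof
    assume "coverable I Delta F"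
    then obtain V E Ls where c: "lossy_execution_covering I Delta V E Ls F"
      unfolding coverable_def by blast
    then have "\<exists>v\<in>V. last Ls v \<in> F" unfolding lossy_execution_covering_def by (elim conjE)
    then obtain v where "v \<in> V" "last Ls v \<in> F" by blast
    then have "lossy_execution_covering I Delta V E Ls {last Ls v}"
      using lec_change[OF c] by blast
    then show "\<exists>q\<in>F. coverable I Delta {q}" unfolding coverable_def using \<open>last Ls v \<in> F\<close> by blast
  next
    assume "\<exists>q\<in>F. coverable I Delta {q}"
    then obtain q V E Ls where qF: "q \<in> F" and c: "lossy_execution_covering I Delta V E Ls {q}"
      unfolding coverable_def by blast
    then have "\<exists>v\<in>V. last Ls v \<in> {q}" unfolding lossy_execution_covering_def by (elim conjE)
    then obtain v where v: "v \<in> V" "last Ls v = q" by blast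
    have "lossy_execution_covering I Delta V E Ls F"
      using lec_change[OF c v(1)] v(2) qF by simp
    then show "coverable I Delta F" unfolding coverable_def by blast
  qed
  show ?thesis
  proof (intro conjI allI impI)
    show "S = {q. coverable I Delta {q}}" by (rule eq)
    fix F :: "'q set"
    show "coverable I Delta F \<longleftrightarrow> F \<inter> S \<noteq> {}"
      unfolding cov[of F] using eq by auto
  qed
qed

end
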